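(* Let $(N,J,g)$ be a Kähler manifold of complex dimension $2n$ and $F:M\to N$ an immersion of a manifold $M$ of real dimension $2n$, with induced metric $g_M=F^*g$. Let $p_0\in M$ be a point without complex directions, i.e. $\cos\theta_\alpha(p_0)<1$ for all $\alpha$, and let $\{X_\alpha,Y_\alpha\}_{1\le\alpha\le n}$ be a $g_M$-orthonormal basis of $T_{p_0}M$ diagonalizing $F^*\omega$ at $p_0$, with $Z_\alpha=\frac{X_\alpha-iY_\alpha}{2}$, $Z_{\bar\alpha}=\frac{X_\alpha+iY_\alpha}{2}$. Then for all $U,V\in T^{\mathbb C}_{F(p_0)}N$, \[ Ricci^N(U,V)=\sum_{1\le\mu\le n}\frac{4}{\sin^2\theta_\mu}\,R^N\big(U,JV,dF(Z_\mu),\,JdF(Z_{\bar\mu})+i\cos\theta_\mu\, dF(Z_{\bar\mu})\big), \] where $\theta_\mu=\theta_\mu(p_0)$.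
   Context: $\omega(U,V)=g(JU,V)$ is the Kähler form of $N$. At $p\in M$, $F^*\omega$ is identified with a skew-symmetric endomorphism of $T_pM$ via $g_M(F^*\omega(X),Y)=F^*\omega(X,Y)$. A $g_M$-orthonormal basis $X_1,Y_1,\dots,X_n,Y_n$ of $T_pM$ diagonalizes $F^*\omega$ if $F^*\omega(X_\alpha)=\cos\theta_\alpha Y_\alpha$ and $F^*\omega(Y_\alpha)=-\cos\theta_\alpha X_\alpha$ with $1\ge\cos\theta_1\ge\dots\ge\cos\theta_n\ge 0$; the angles $\theta_\alpha\in[0,\pi/2]$ are the Kähler angles of $F$ at $p$. A complex direction at $p$ is a real 2-plane $P\subset T_pM$ with $J\,dF(P)=dF(P)$; $p$ has no complex directions iff $\cos\theta_\alpha(p)<1$ for all $\alpha$. Curvature conventions: $R^N(U,V)W=-\nabla_U\nabla_VW+\nabla_V\nabla_UW+\nabla_{[U,V]}W$, $R^N(U,V,W,Z)=g(R^N(U,V)W,Z)$; $Ricci^N$ is the Ricci tensor of $N$. All tensors ($g$, $R^N$, $Ricci^N$, $dF$, $J$) are extended complex-(multi)linearly to complexified tangent spaces. *)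

theory Defs
  imports "HOL-Analysis.Analysis"
begin

text \<open>Pointwise (linear-algebraic) model.  The real tangent space T_{F(p0)}N is a
 Euclidean space 'v with g = inner; T_{p0}M is a Euclidean space 'm (only its vector
 space structure is used); dF is the differential of F at p0.
 Complexified vectors are represented as pairs (real part, imaginary part).\<close>

type_synonym 'v cvec = "'v \<times> 'v"

definition cpart :: "bool \<Rightarrow> 'v cvec \<Rightarrow> 'v" where
  "cpart b u = (if b then snd u else fst u)"

definition iw :: "bool \<Rightarrow> complex" where
  "iw b = (if b then \<i> else 1)"

definition cmap :: "('a \<Rightarrow> 'b) \<Rightarrow> 'a cvec \<Rightarrow> 'b cvec" where
  "cmap f u = (f (fst u), f (snd u))"

definition cscale :: "complex \<Rightarrow> 'v::real_vector cvec \<Rightarrow> 'v cvec" where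
  "cscale z u = (Re z *\<^sub>R fst u - Im z *\<^sub>R snd u, Re z *\<^sub>R snd u + Im z *\<^sub>R fst u)"

definition cext2 :: "('v \<Rightarrow> 'v \<Rightarrow> real) \<Rightarrow> 'v cvec \<Rightarrow> 'v cvec \<Rightarrow> complex" where
  "cext2 B U V = (\<Sum>a\<in>UNIV. \<Sum>b\<in>UNIV. iw a * iw b * complex_of_real (B (cpart a U) (cpart b V)))"

definition cext4 :: "('v \<Rightarrow> 'v \<Rightarrow> 'v \<Rightarrow> 'v \<Rightarrow> real) \<Rightarrow> 'v cvec \<Rightarrow> 'v cvec \<Rightarrow> 'v cvec \<Rightarrow> 'v cvec \<Rightarrow> complex" where
  "cext4 R U V W Z = (\<Sum>a\<in>UNIV. \<Sum>b\<in>UNIV. \<Sum>c\<in>UNIV. \<Sum>d\<in>UNIV.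
      iw a * iw b * iw c * iw d *
      complex_of_real (R (cpart a U) (cpart b V) (cpart c W) (cpart d Z)))"

definition orth_complex_structure :: "('v::real_inner \<Rightarrow> 'v) \<Rightarrow> bool" where
  "orth_complex_structure J \<longleftrightarrow> linear J \<and> (\<forall>u. J (J u) = - u) \<and>
     (\<forall>u v. inner (J u) (J v) = inner u v)"

definition multilinear4 :: "('v::real_vector \<Rightarrow> 'v \<Rightarrow> 'v \<Rightarrow> 'v \<Rightarrow> real) \<Rightarrow> bool" where
  "multilinear4 R \<longleftrightarrow>
     (\<forall>v w z. linear (\<lambda>u. R u v w z)) \<and> (\<forall>u w z. linear (\<lambda>v. R u v w z)) \<and>
     (\<forall>u v z. linear (\<lambda>w. R u v w z)) \<and> (\<forall>u v w. linear (\<lambda>z. R u v w z))"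

text \<open>Pointwise content of the curvature tensor R^N(U,V,W,Z) = g(R^N(U,V)W,Z) of a
 Kaehler manifold: an algebraic curvature tensor commuting with J (nabla J = 0).\<close>
definition kaehler_curvature :: "('v::real_inner \<Rightarrow> 'v) \<Rightarrow> ('v \<Rightarrow> 'v \<Rightarrow> 'v \<Rightarrow> 'v \<Rightarrow> real) \<Rightarrow> bool" where
  "kaehler_curvature J R \<longleftrightarrow> multilinear4 R \<and>
     (\<forall>x y z w. R x y z w = - R y x z w) \<and>
     (\<forall>x y z w. R x y z w = - R x y w z) \<and>
     (\<forall>x y z w. R x y z w = R z w x y) \<and>
     (\<forall>x y z w. R x y z w + R y z x w + R z x y w = 0) \<and>
     (\<forall>x y z w. R x y (J z) (J w) = R x y z w)"

text \<open>Ricci tensor.  With the paper's convention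
 R(U,V)W = -nabla_U nabla_V W + nabla_V nabla_U W + nabla_[U,V] W, one has
 Ricci(U,V) = sum_i R(U,e_i,V,e_i) for any g-orthonormal basis e_i.\<close>
definition ricci :: "('v::euclidean_space \<Rightarrow> 'v \<Rightarrow> 'v \<Rightarrow> 'v \<Rightarrow> real) \<Rightarrow> 'v \<Rightarrow> 'v \<Rightarrow> real" where
  "ricci R u v = (\<Sum>e\<in>Basis. R u e v e)"

definition pull_metric :: "('m \<Rightarrow> 'v::real_inner) \<Rightarrow> 'm \<Rightarrow> 'm \<Rightarrow> real" where
  "pull_metric dF X Y = inner (dF X) (dF Y)"

definition pull_kform :: "('v::real_inner \<Rightarrow> 'v) \<Rightarrow> ('m \<Rightarrow> 'v) \<Rightarrow> 'm \<Rightarrow> 'm \<Rightarrow> real" where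
  "pull_kform J dF X Y = inner (J (dF X)) (dF Y)"

definition zvec :: "'m::real_vector \<Rightarrow> 'm \<Rightarrow> 'm cvec" where
  "zvec X Y = ((1/2) *\<^sub>R X, - ((1/2) *\<^sub>R Y))"

definition zbvec :: "'m::real_vector \<Rightarrow> 'm \<Rightarrow> 'm cvec" where
  "zbvec X Y = ((1/2) *\<^sub>R X, (1/2) *\<^sub>R Y)"

definition diagonalizing_basis ::
  "('v::real_inner \<Rightarrow> 'v) \<Rightarrow> ('m::euclidean_space \<Rightarrow> 'v) \<Rightarrow> nat \<Rightarrow> (nat \<Rightarrow> 'm) \<Rightarrow> (nat \<Rightarrow> 'm) \<Rightarrow> (nat \<Rightarrow> real) \<Rightarrow> bool" where
  "diagonalizing_basis J dF n X Y \<theta> \<longleftrightarrow>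
     (\<forall>a\<in>{1..n}. \<forall>b\<in>{1..n}.
        pull_metric dF (X a) (X b) = (if a = b then 1 else 0) \<and>
        pull_metric dF (Y a) (Y b) = (if a = b then 1 else 0) \<and>
        pull_metric dF (X a) (Y b) = 0) \<and>
     span ((X ` {1..n}) \<union> (Y ` {1..n})) = UNIV \<and>
     (\<forall>a\<in>{1..n}. \<forall>W. pull_kform J dF (X a) W = cos (\<theta> a) * pull_metric dF (Y a) W) \<and>
     (\<forall>a\<in>{1..n}. \<forall>W. pull_kform J dF (Y a) W = - cos (\<theta> a) * pull_metric dF (X a) W) \<and>
     (\<forall>a\<in>{1..n}. 0 \<le> \<theta> a \<and> \<theta> a \<le> pi / 2) \<and>
     (\<forall>a\<in>{1..n}. \<forall>b\<in>{1..n}. a \<le> b \<longrightarrow> cos (\<theta> b) \<le> cos (\<theta> a))"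

end

theory Submission
  imports Defs
begin
lemma onb_expand:
  fixes f :: "'i \<Rightarrow> 'v::euclidean_space"
  assumes fin: "finite I" and cardI: "card I = DIM('v)"
    and on: "\<forall>i\<in>I. \<forall>j\<in>I. inner (f i) (f j) = (if i = j then 1 else 0)"
  shows "v = (\<Sum>i\<in>I. inner v (f i) *\<^sub>R f i)"
proof -
  have inj: "inj_on f I"
  proof (rule inj_onI)
    fix i j assume "i \<in> I" "j \<in> I" "f i = f j"
    then have "inner (f i) (f j) = 1" using on by auto
    then show "i = j" using on \<open>i\<in>I\<close> \<open>j\<in>I\<close> by (metis zero_neq_one)
  qed
  have po: "pairwise orthogonal (f ` I)"
    unfolding pairwise_def orthogonal_def using on by auto
  have n0: "0 \<notin> f ` I"
  proof
    assume "0 \<in> f ` I" then obtain i where "i \<in> I" "f i = 0" by auto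
    then show False using on by (metis inner_zero_left zero_neq_one)
  qed
  have ind: "independent (f ` I)" by (rule pairwise_orthogonal_independent[OF po n0])
  have cd: "card (f ` I) = dim (UNIV::'v set)" using card_image[OF inj] cardI by simp
  have sp: "UNIV \<subseteq> span (f ` I)"
    using card_eq_dim[of "f ` I" UNIV] cd fin ind by auto
  define r where "r = v - (\<Sum>i\<in>I. inner v (f i) *\<^sub>R f i)"
  have rj: "inner r (f j) = 0" if "j \<in> I" for j
  proof -
    have "inner (\<Sum>i\<in>I. inner v (f i) *\<^sub>R f i) (f j) = (\<Sum>i\<in>I. inner v (f i) * inner (f i) (f j))"
      by (simp add: inner_sum_left)
    also have "\<dots> = (\<Sum>i\<in>I. if i = j then inner v (f j) else 0)"
      using on that by (intro sum.cong) auto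
    also have "\<dots> = inner v (f j)" using fin that by simp
    finally show ?thesis unfolding r_def by (simp add: inner_diff_left)
  qed
  have "orthogonal r r"
    by (rule orthogonal_to_span[of r "f ` I"]) (use sp rj in \<open>auto simp: orthogonal_def\<close>)
  then have "r = 0" by (simp add: orthogonal_self)
  then show ?thesis unfolding r_def by simp
qed

lemma trace_onb:
  fixes f :: "'i \<Rightarrow> 'v::euclidean_space" and Q :: "'v \<Rightarrow> 'v \<Rightarrow> real"
  assumes fin: "finite I" and cardI: "card I = DIM('v)"
    and on: "\<forall>i\<in>I. \<forall>j\<in>I. inner (f i) (f j) = (if i = j then 1 else 0)"
    and l1: "\<And>b. linear (\<lambda>a. Q a b)" and l2: "\<And>a. linear (\<lambda>b. Q a b)"
  shows "(\<Sum>i\<in>I. Q (f i) (f i)) = (\<Sum>e\<in>Basis. Q e e)"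
proof -
  have "Q e e = (\<Sum>i\<in>I. \<Sum>j\<in>I. (inner e (f i) * inner e (f j)) * Q (f i) (f j))" for e
  proof -
    have "Q e e = Q (\<Sum>i\<in>I. inner e (f i) *\<^sub>R f i) (\<Sum>j\<in>I. inner e (f j) *\<^sub>R f j)"
      using onb_expand[OF fin cardI on, of e] by simp
    also have "\<dots> = (\<Sum>i\<in>I. inner e (f i) * Q (f i) (\<Sum>j\<in>I. inner e (f j) *\<^sub>R f j))"
      by (simp add: linear_sum[OF l1] linear_cmul[OF l1])
    also have "\<dots> = (\<Sum>i\<in>I. \<Sum>j\<in>I. (inner e (f i) * inner e (f j)) * Q (f i) (f j))"
      by (simp add: linear_sum[OF l2] linear_cmul[OF l2] sum_distrib_left mult.assoc)
    finally show ?thesis .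
  qed
  then have "(\<Sum>e\<in>Basis. Q e e) = (\<Sum>i\<in>I. \<Sum>j\<in>I. (\<Sum>e\<in>Basis. inner e (f i) * inner e (f j)) * Q (f i) (f j))"
    by (simp add: sum_distrib_right sum.swap[of _ Basis])
  also have "\<dots> = (\<Sum>i\<in>I. \<Sum>j\<in>I. inner (f i) (f j) * Q (f i) (f j))"
    by (simp add: euclidean_inner[of "f _" "f _"] inner_commute)
  also have "\<dots> = (\<Sum>i\<in>I. \<Sum>j\<in>I. if i = j then Q (f i) (f i) else 0)"
    using on by (intro sum.cong refl) auto
  also have "\<dots> = (\<Sum>i\<in>I. Q (f i) (f i))" using fin by simp
  finally show ?thesis by simp
qed

locale kctx =
  fixes J :: "'v::euclidean_space \<Rightarrow> 'v" and R :: "'v \<Rightarrow> 'v \<Rightarrow> 'v \<Rightarrow> 'v \<Rightarrow> real"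
  assumes J: "orth_complex_structure J" and R: "kaehler_curvature J R"
begin

lemma Jlin: "linear J" using J unfolding orth_complex_structure_def by auto
lemma JJ[simp]: "J (J u) = - u" using J unfolding orth_complex_structure_def by auto
lemma innerJJ[simp]: "inner (J u) (J v) = inner u v" using J unfolding orth_complex_structure_def by auto
lemma J_add[simp]: "J (a + b) = J a + J b" using Jlin by (simp add: linear_add)
lemma J_diff[simp]: "J (a - b) = J a - J b" using Jlin by (simp add: linear_diff)
lemma J_scale[simp]: "J (r *\<^sub>R a) = r *\<^sub>R J a" using Jlin by (simp add: linear_cmul)
lemma J_minus[simp]: "J (- a) = - J a" using Jlin by (simp add: linear_neg)
lemma inner_J_swap: "inner (J p) q = - inner p (J q)"
proof -
  have "inner (J p) q = inner (J (J p)) (J q)" by (simp only: innerJJ)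
  also have "\<dots> = - inner p (J q)" by (subst JJ) (simp only: inner_minus_left)
  finally show ?thesis .
qed

lemma ml: "multilinear4 R" using R unfolding kaehler_curvature_def by auto
lemma lin1: "linear (\<lambda>a. R a y z w)" using ml unfolding multilinear4_def by auto
lemma lin2: "linear (\<lambda>a. R x a z w)" using ml unfolding multilinear4_def by auto
lemma lin3: "linear (\<lambda>a. R x y a w)" using ml unfolding multilinear4_def by auto
lemma lin4: "linear (\<lambda>a. R x y z a)" using ml unfolding multilinear4_def by auto

lemma R3_add[simp]: "R x y (a + b) w = R x y a w + R x y b w" using linear_add[OF lin3] by blast
lemma R3_diff[simp]: "R x y (a - b) w = R x y a w - R x y b w" using linear_diff[OF lin3] by blast
lemma R3_scale[simp]: "R x y (r *\<^sub>R a) w = r * R x y a w" using linear_cmul[OF lin3] by simp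
lemma R3_minus[simp]: "R x y (- a) w = - R x y a w" using linear_neg[OF lin3] by blast
lemma R4_add[simp]: "R x y z (a + b) = R x y z a + R x y z b" using linear_add[OF lin4] by blast
lemma R4_diff[simp]: "R x y z (a - b) = R x y z a - R x y z b" using linear_diff[OF lin4] by blast
lemma R4_scale[simp]: "R x y z (r *\<^sub>R a) = r * R x y z a" using linear_cmul[OF lin4] by simp
lemma R4_minus[simp]: "R x y z (- a) = - R x y z a" using linear_neg[OF lin4] by blast

lemma R_anti12: "R x y z w = - R y x z w" using R unfolding kaehler_curvature_def by blast
lemma R_anti34: "R x y z w = - R x y w z" using R unfolding kaehler_curvature_def by blast
lemma R_pair: "R x y z w = R z w x y" using R unfolding kaehler_curvature_def by blast
lemma R_bianchi: "R x y z w + R y z x w + R z x y w = 0" using R unfolding kaehler_curvature_def by blast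
lemma R_J34[simp]: "R x y (J z) (J w) = R x y z w" using R unfolding kaehler_curvature_def by blast

lemma R_self34[simp]: "R x y z z = 0" using R_anti34[of x y z z] by simp

lemma local_cext2:
  fixes dF :: "'m::real_vector \<Rightarrow> 'v"
  assumes dF: "linear dF"
  shows "cext2 (\<lambda>w z. R u v w z) (cmap dF (zvec Xa Ya))
       (cmap J (cmap dF (zbvec Xa Ya)) + cscale (\<i> * complex_of_real c) (cmap dF (zbvec Xa Ya)))
     = complex_of_real ((R u v (dF Xa) (J (dF Xa)) + R u v (dF Ya) (J (dF Ya)) - 2 * c * R u v (dF Xa) (dF Ya)) / 4)"
proof -
  have a: "R u v (dF Ya) (dF Xa) = - R u v (dF Xa) (dF Ya)" using R_anti34 by blast
  have b: "R u v (dF Ya) (J (dF Xa)) = R u v (dF Xa) (J (dF Ya))"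
    using R_J34[of u v "dF Ya" "J (dF Xa)"] R_anti34[of u v "J (dF Ya)" "dF Xa"] by simp
  show ?thesis
    unfolding cext2_def cmap_def zvec_def zbvec_def cscale_def
    using a b
    by (simp add: UNIV_bool cpart_def iw_def linear_cmul[OF dF] linear_neg[OF dF] complex_eq_iff algebra_simps)
qed


lemma ric_pair: "R u (J v) f (J f) = R u (J f) v (J f) + R u f v f"
proof -
  have b: "R u (J v) f (J f) + R (J v) f u (J f) + R f u (J v) (J f) = 0" by (rule R_bianchi)
  have c1: "R f u (J v) (J f) = - R u f v f" using R_anti12[of f u v f] by simp
  have c2: "R (J v) f u (J f) = - R u (J f) v (J f)"
  proof -
    have "R (J v) f u (J f) = R u (J f) (J v) f" by (rule R_pair)
    also have "\<dots> = R u (J f) (J v) (J (J (- f)))" by simp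
    also have "\<dots> = R u (J f) v (J (- f))" by (rule R_J34)
    also have "\<dots> = - R u (J f) v (J f)" by simp
    finally show ?thesis .
  qed
  show ?thesis using b c1 c2 by linarith
qed

lemma step_b:
  assumes s: "s > 0" and sc: "s^2 + c^2 = 1"
  shows "(R u v x (J x) + R u v y (J y) - 2 * c * R u v x y) / s^2
    = R u v x (J x) + R u v ((1/s) *\<^sub>R (y - c *\<^sub>R J x)) (J ((1/s) *\<^sub>R (y - c *\<^sub>R J x)))"
proof -
  have a: "R u v y x = - R u v x y" using R_anti34 by blast
  have b: "R u v (J x) x = - R u v x (J x)" using R_anti34 by blast
  have c: "R u v (J x) (J y) = R u v x y" by simp
  have eq1: "R u v ((1/s) *\<^sub>R (y - c *\<^sub>R J x)) (J ((1/s) *\<^sub>R (y - c *\<^sub>R J x)))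
      = (1/s^2) * (R u v y (J y) - 2 * c * R u v x y + c^2 * R u v x (J x))"
    using a b by (simp add: algebra_simps power2_eq_square)
  have k: "s^2 * R u v x (J x) + c^2 * R u v x (J x) = R u v x (J x)"
    using sc by (metis distrib_right mult_1)
  show ?thesis unfolding eq1 using s k by (simp add: field_simps)
qed

end
lemma cext4_split:
  "cext4 R U V W Z = (\<Sum>a\<in>UNIV. \<Sum>b\<in>UNIV. iw a * iw b * cext2 (\<lambda>w z. R (cpart a U) (cpart b V) w z) W Z)"
  unfolding cext4_def cext2_def by (simp add: sum_distrib_left mult.assoc)

lemma cpart_cmap[simp]: "cpart b (cmap J V) = J (cpart b V)"
  by (simp add: cpart_def cmap_def)

lemma resum:
  fixes k :: "'i \<Rightarrow> complex"
  shows "(\<Sum>\<mu>\<in>M. k \<mu> * (\<Sum>a\<in>A. \<Sum>b\<in>B. p a b * C \<mu> a b)) = (\<Sum>a\<in>A. \<Sum>b\<in>B. p a b * (\<Sum>\<mu>\<in>M. k \<mu> * C \<mu> a b))"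
proof -
  have "(\<Sum>\<mu>\<in>M. k \<mu> * (\<Sum>a\<in>A. \<Sum>b\<in>B. p a b * C \<mu> a b)) = (\<Sum>\<mu>\<in>M. \<Sum>a\<in>A. \<Sum>b\<in>B. p a b * (k \<mu> * C \<mu> a b))"
    by (simp add: sum_distrib_left mult.left_commute)
  also have "\<dots> = (\<Sum>a\<in>A. \<Sum>\<mu>\<in>M. \<Sum>b\<in>B. p a b * (k \<mu> * C \<mu> a b))" by (rule sum.swap)
  also have "\<dots> = (\<Sum>a\<in>A. \<Sum>b\<in>B. \<Sum>\<mu>\<in>M. p a b * (k \<mu> * C \<mu> a b))" by (simp only: sum.swap[of _ M])
  also have "\<dots> = (\<Sum>a\<in>A. \<Sum>b\<in>B. p a b * (\<Sum>\<mu>\<in>M. k \<mu> * C \<mu> a b))" by (simp add: sum_distrib_left)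
  finally show ?thesis .
qed

theorem lemma1p1:
  fixes J :: "'v::euclidean_space \<Rightarrow> 'v"
    and R :: "'v \<Rightarrow> 'v \<Rightarrow> 'v \<Rightarrow> 'v \<Rightarrow> real"
    and dF :: "'m::euclidean_space \<Rightarrow> 'v"
    and n :: nat
    and X Y :: "nat \<Rightarrow> 'm"
    and \<theta> :: "nat \<Rightarrow> real"
    and U V :: "'v cvec"
  assumes dimM: "DIM('m) = 2 * n"
    and dimN: "DIM('v) = 4 * n"
    and J: "orth_complex_structure J"
    and R: "kaehler_curvature J R"
    and imm: "linear dF" "inj dF"
    and basis: "diagonalizing_basis J dF n X Y \<theta>"
    and no_cplx: "\<forall>a\<in>{1..n}. cos (\<theta> a) < 1"
  shows "cext2 (ricci R) U V =
    (\<Sum>\<mu>=1..n. complex_of_real (4 / (sin (\<theta> \<mu>))\<^sup>2) *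
       cext4 R U (cmap J V) (cmap dF (zvec (X \<mu>) (Y \<mu>)))
         (cmap J (cmap dF (zbvec (X \<mu>) (Y \<mu>)))
          + cscale (\<i> * complex_of_real (cos (\<theta> \<mu>))) (cmap dF (zbvec (X \<mu>) (Y \<mu>)))))"
proof -
  interpret kctx J R using J R by unfold_locales
  define x where "x a = dF (X a)" for a
  define y where "y a = dF (Y a)" for a
  define c where "c a = cos (\<theta> a)" for a
  define s where "s a = sin (\<theta> a)" for a
  define w where "w a = (1 / s a) *\<^sub>R (y a - c a *\<^sub>R J (x a))" for a
  have B: "\<forall>a\<in>{1..n}. \<forall>b\<in>{1..n}.
        inner (x a) (x b) = (if a = b then 1 else 0) \<and>
        inner (y a) (y b) = (if a = b then 1 else 0) \<and>
        inner (x a) (y b) = 0"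
    using basis unfolding diagonalizing_basis_def pull_metric_def x_def y_def by blast
  have KX: "\<forall>a\<in>{1..n}. \<forall>W. inner (J (x a)) (dF W) = c a * inner (y a) (dF W)"
    using basis unfolding diagonalizing_basis_def pull_metric_def pull_kform_def x_def y_def c_def by blast
  have KY: "\<forall>a\<in>{1..n}. \<forall>W. inner (J (y a)) (dF W) = - c a * inner (x a) (dF W)"
    using basis unfolding diagonalizing_basis_def pull_metric_def pull_kform_def x_def y_def c_def by blast
  have ang: "\<forall>a\<in>{1..n}. 0 \<le> \<theta> a \<and> \<theta> a \<le> pi / 2"
    using basis unfolding diagonalizing_basis_def by blast
  have spos: "s a > 0" if "a \<in> {1..n}" for a
  proof -
    have "\<theta> a \<noteq> 0" using no_cplx that by (metis cos_zero less_irrefl)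
    moreover have "0 \<le> \<theta> a" "\<theta> a \<le> pi / 2" using ang that by auto
    ultimately have "0 < \<theta> a" "\<theta> a < pi" using pi_gt_zero by linarith+
    then show ?thesis unfolding s_def by (rule sin_gt_zero)
  qed
  have sc: "(s a)^2 + (c a)^2 = 1" for a unfolding s_def c_def by simp
  have xx: "inner (x a) (x b) = (if a = b then 1 else 0)"
   and yy: "inner (y a) (y b) = (if a = b then 1 else 0)"
   and xy: "inner (x a) (y b) = 0" and yx: "inner (y a) (x b) = 0"
   and Jxx: "inner (J (x a)) (x b) = 0" and xJx: "inner (x b) (J (x a)) = 0"
   and Jxy: "inner (J (x a)) (y b) = (if a = b then c a else 0)"
   and yJx: "inner (y b) (J (x a)) = (if a = b then c a else 0)"
   and Jyx: "inner (J (y a)) (x b) = (if a = b then - c a else 0)"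
   and xJy: "inner (x b) (J (y a)) = (if a = b then - c a else 0)"
   and Jyy: "inner (J (y a)) (y b) = 0" and yJy: "inner (y b) (J (y a)) = 0"
   if "a \<in> {1..n}" "b \<in> {1..n}" for a b
  proof -
    have 1: "inner (x a) (x b) = (if a = b then 1 else 0)" "inner (y a) (y b) = (if a = b then 1 else 0)"
      "inner (x a) (y b) = 0" "inner (x b) (y a) = 0"
      using B that by blast+
    have 2: "inner (J (x a)) (x b) = c a * inner (y a) (x b)" "inner (J (x a)) (y b) = c a * inner (y a) (y b)"
      "inner (J (y a)) (x b) = - c a * inner (x a) (x b)" "inner (J (y a)) (y b) = - c a * inner (x a) (y b)"
      using KX KY that unfolding x_def y_def by blast+
    show "inner (x a) (x b) = (if a = b then 1 else 0)" "inner (y a) (y b) = (if a = b then 1 else 0)"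
      "inner (x a) (y b) = 0" "inner (y a) (x b) = 0"
      using 1 by (auto simp: inner_commute)
    show "inner (J (x a)) (x b) = 0" "inner (x b) (J (x a)) = 0"
      "inner (J (x a)) (y b) = (if a = b then c a else 0)" "inner (y b) (J (x a)) = (if a = b then c a else 0)"
      "inner (J (y a)) (x b) = (if a = b then - c a else 0)" "inner (x b) (J (y a)) = (if a = b then - c a else 0)"
      "inner (J (y a)) (y b) = 0" "inner (y b) (J (y a)) = 0"
      using 1 2 by (auto simp: inner_commute)
  qed
  define h where "h k = (if snd k then w (fst k) else x (fst k))" for k
  define K where "K = {1..n} \<times> (UNIV :: bool set)"
  have L1: "inner (h k) (h k') = (if k = k' then 1 else 0)" if "k \<in> K" "k' \<in> K" for k k'
  proof -
    obtain a q b q' where k: "k = (a, q)" "k' = (b, q')" "a \<in> {1..n}" "b \<in> {1..n}"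
      using \<open>k \<in> K\<close> \<open>k' \<in> K\<close> unfolding K_def by (cases k, cases k') auto
    have sa: "s a > 0" "s b > 0" using spos k by auto
    show ?thesis
    proof (cases "a = b")
      case True
      then show ?thesis using k sa sc[of a]
        by (cases q; cases q') (auto simp: h_def w_def inner_diff_left inner_diff_right
          xx xy yx yy Jxx xJx Jxy yJx field_simps power2_eq_square)
    next
      case False
      then show ?thesis using k sa
        by (cases q; cases q') (auto simp: h_def w_def inner_diff_left inner_diff_right
          xx xy yx yy Jxx xJx Jxy yJx)
    qed
  qed
  have L2: "inner (J (h k)) (h k') = 0" if "k \<in> K" "k' \<in> K" for k k'
  proof -
    obtain a q b q' where k: "k = (a, q)" "k' = (b, q')" "a \<in> {1..n}" "b \<in> {1..n}"
      using \<open>k \<in> K\<close> \<open>k' \<in> K\<close> unfolding K_def by (cases k, cases k') auto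
    show ?thesis using k
      by (cases q; cases q') (auto simp: h_def w_def inner_diff_left inner_diff_right
          inner_add_left inner_add_right xx xy yx yy Jxx xJx Jxy yJx Jyx xJy Jyy yJy)
  qed
  define I where "I = K \<times> (UNIV :: bool set)"
  define f where "f i = (if snd i then J (h (fst i)) else h (fst i))" for i
  have finI: "finite I" unfolding I_def K_def by simp
  have cardI: "card I = DIM('v)" unfolding I_def K_def using dimN by (simp add: card_cartesian_product)
  have onf: "\<forall>i\<in>I. \<forall>j\<in>I. inner (f i) (f j) = (if i = j then 1 else 0)"
  proof (intro ballI)
    fix i j assume "i \<in> I" "j \<in> I"
    then obtain k p k' p' where ij: "i = (k, p)" "j = (k', p')" "k \<in> K" "k' \<in> K" unfolding I_def by auto
    show "inner (f i) (f j) = (if i = j then 1 else 0)"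
      using ij L1[of k k'] L2[of k k'] L2[of k' k]
      by (cases p; cases p') (auto simp: f_def inner_commute)
  qed
  have onJf: "\<forall>i\<in>I. \<forall>j\<in>I. inner (J (f i)) (J (f j)) = (if i = j then 1 else 0)"
    using onf by simp
  have ric: "(\<Sum>a=1..n. R u (J v) (x a) (J (x a)) + R u (J v) (w a) (J (w a))) = ricci R u v" for u v
  proof -
    have t1: "(\<Sum>i\<in>I. R u (f i) v (f i)) = ricci R u v"
      unfolding ricci_def by (rule trace_onb[OF finI cardI onf]) (simp_all add: lin2 lin4)
    have t2: "(\<Sum>i\<in>I. R u (J (f i)) v (J (f i))) = ricci R u v"
      unfolding ricci_def by (rule trace_onb[OF finI cardI onJf]) (simp_all add: lin2 lin4)
    have "(\<Sum>i\<in>I. R u (J v) (f i) (J (f i))) = 2 * ricci R u v"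
      using t1 t2 by (simp add: ric_pair sum.distrib)
    moreover have "(\<Sum>i\<in>I. R u (J v) (f i) (J (f i))) = (\<Sum>k\<in>K. 2 * R u (J v) (h k) (J (h k)))"
    proof -
      have "(\<Sum>i\<in>I. R u (J v) (f i) (J (f i))) = (\<Sum>k\<in>K. \<Sum>p\<in>UNIV. R u (J v) (f (k,p)) (J (f (k,p))))"
        unfolding I_def by (simp add: sum.cartesian_product)
      also have "\<dots> = (\<Sum>k\<in>K. 2 * R u (J v) (h k) (J (h k)))"
        using R_anti34[of u "J v" "J (h _)" "h _"] by (simp add: UNIV_bool f_def)
      finally show ?thesis .
    qed
    moreover have "(\<Sum>k\<in>K. R u (J v) (h k) (J (h k))) = (\<Sum>a=1..n. R u (J v) (x a) (J (x a)) + R u (J v) (w a) (J (w a)))"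
    proof -
      have "(\<Sum>k\<in>K. R u (J v) (h k) (J (h k))) = (\<Sum>a\<in>{1..n}. \<Sum>q\<in>UNIV. R u (J v) (h (a,q)) (J (h (a,q))))"
        unfolding K_def by (simp add: sum.cartesian_product)
      then show ?thesis by (simp add: UNIV_bool h_def add.commute)
    qed
    ultimately show ?thesis by (simp add: sum_distrib_left[symmetric])
  qed
  have realid: "(\<Sum>\<mu>=1..n. complex_of_real (4 / (sin (\<theta> \<mu>))\<^sup>2) *
       cext2 (\<lambda>w z. R u (J v) w z) (cmap dF (zvec (X \<mu>) (Y \<mu>)))
         (cmap J (cmap dF (zbvec (X \<mu>) (Y \<mu>)))
          + cscale (\<i> * complex_of_real (cos (\<theta> \<mu>))) (cmap dF (zbvec (X \<mu>) (Y \<mu>)))))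
     = complex_of_real (ricci R u v)" for u v
  proof -
    have "complex_of_real (4 / (sin (\<theta> \<mu>))\<^sup>2) *
       cext2 (\<lambda>w z. R u (J v) w z) (cmap dF (zvec (X \<mu>) (Y \<mu>)))
         (cmap J (cmap dF (zbvec (X \<mu>) (Y \<mu>)))
          + cscale (\<i> * complex_of_real (cos (\<theta> \<mu>))) (cmap dF (zbvec (X \<mu>) (Y \<mu>))))
      = complex_of_real (R u (J v) (x \<mu>) (J (x \<mu>)) + R u (J v) (w \<mu>) (J (w \<mu>)))"
      if "\<mu> \<in> {1..n}" for \<mu>
    proof -
      have e: "(R u (J v) (x \<mu>) (J (x \<mu>)) + R u (J v) (y \<mu>) (J (y \<mu>)) - 2 * c \<mu> * R u (J v) (x \<mu>) (y \<mu>)) / (s \<mu>)^2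
         = R u (J v) (x \<mu>) (J (x \<mu>)) + R u (J v) (w \<mu>) (J (w \<mu>))"
        unfolding w_def by (rule step_b[OF spos[OF that] sc])
      have sn: "sin (\<theta> \<mu>) \<noteq> 0" using spos[OF that] unfolding s_def by simp
      show ?thesis unfolding local_cext2[OF imm(1)] e[symmetric]
        using sn by (simp add: x_def y_def c_def s_def field_simps)
    qed
    then have "(\<Sum>\<mu>=1..n. complex_of_real (4 / (sin (\<theta> \<mu>))\<^sup>2) *
       cext2 (\<lambda>w z. R u (J v) w z) (cmap dF (zvec (X \<mu>) (Y \<mu>)))
         (cmap J (cmap dF (zbvec (X \<mu>) (Y \<mu>)))
          + cscale (\<i> * complex_of_real (cos (\<theta> \<mu>))) (cmap dF (zbvec (X \<mu>) (Y \<mu>)))))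
      = (\<Sum>\<mu>=1..n. complex_of_real (R u (J v) (x \<mu>) (J (x \<mu>)) + R u (J v) (w \<mu>) (J (w \<mu>))))"
      by (rule sum.cong[OF refl])
    also have "\<dots> = complex_of_real (\<Sum>\<mu>=1..n. R u (J v) (x \<mu>) (J (x \<mu>)) + R u (J v) (w \<mu>) (J (w \<mu>)))"
      by (rule of_real_sum[symmetric])
    also have "\<dots> = complex_of_real (ricci R u v)" by (simp only: ric)
    finally show ?thesis .
  qed
  have "cext2 (ricci R) U V = (\<Sum>a\<in>UNIV. \<Sum>b\<in>UNIV. iw a * iw b * complex_of_real (ricci R (cpart a U) (cpart b V)))"
    by (simp only: cext2_def)
  also have "\<dots> = (\<Sum>\<mu>=1..n. complex_of_real (4 / (sin (\<theta> \<mu>))\<^sup>2) *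
       cext4 R U (cmap J V) (cmap dF (zvec (X \<mu>) (Y \<mu>)))
         (cmap J (cmap dF (zbvec (X \<mu>) (Y \<mu>)))
          + cscale (\<i> * complex_of_real (cos (\<theta> \<mu>))) (cmap dF (zbvec (X \<mu>) (Y \<mu>)))))"
    by (simp only: cext4_split cpart_cmap resum realid)
  finally show ?thesis .
qed

end
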